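(* Let $u\in L^\infty([0,+\infty);W^{1,p}(\mathbb{T}^d;\mathbb{R}^d))$, $p\in(1,\infty)$, be divergence-free. Then the family \[\mathcal{N}_u:=\{D\in\mathcal{M}\mid \{\mathbbm{1}_D\circ\Phi_t^{-1}\}_{t\ge0}\text{ is precompact in }L^2(\mathbb{T}^d)\}\] is a $\sigma$-algebra on $\mathbb{T}^d$.
   Context: $\mathbb{T}^d$ ($d\ge2$) is the torus with Lebesgue measure $\mu$, and $\mathcal{M}$ is the $\sigma$-algebra of Lebesgue measurable subsets of $\mathbb{T}^d$. $\Phi_t$ denotes the DiPerna–Lions measure-preserving flow map of $u$ (for a.e. $x$, $t\mapsto\Phi_t(x)$ is the unique absolutely continuous solution of $\dot\gamma=u(t,\gamma)$, $\gamma(0)=x$), so that $\mathbbm{1}_D\circ\Phi_t^{-1}$ is the solution at time $t$ of the transport equation $\partial_t\rho+u\cdot\nabla\rho=0$ with initial datum $\mathbbm{1}_D$. *)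

theory Defs
  imports "HOL-Analysis.Analysis"
begin

text \<open>The torus T^d is modelled by the half-open unit cube [0,1)^d in real^'d,
  with (restricted) Lebesgue measure; periodic objects live on real^'d.\<close>

definition unit_cube :: "(real^'d) set" where
  "unit_cube = {x. \<forall>i. 0 \<le> x $ i \<and> x $ i < 1}"

definition torus_proj :: "real^'d \<Rightarrow> real^'d" where
  "torus_proj x = (\<chi> i. frac (x $ i))"

definition periodic_fun :: "(real^'d \<Rightarrow> 'b) \<Rightarrow> bool" where
  "periodic_fun f \<longleftrightarrow> (\<forall>x i. f (x + axis i 1) = f x)"

definition pderiv_j :: "(real^'d \<Rightarrow> real) \<Rightarrow> 'd \<Rightarrow> real^'d \<Rightarrow> real" where
  "pderiv_j \<phi> j x = frechet_derivative \<phi> (at x) (axis j 1)"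

definition test_fun :: "(real^'d \<Rightarrow> real) \<Rightarrow> bool" where
  "test_fun \<phi> \<longleftrightarrow> periodic_fun \<phi> \<and> (\<forall>x. \<phi> differentiable (at x))
     \<and> (\<forall>j. continuous_on UNIV (pderiv_j \<phi> j))"

definition weak_pderiv :: "(real^'d \<Rightarrow> real) \<Rightarrow> 'd \<Rightarrow> (real^'d \<Rightarrow> real) \<Rightarrow> bool" where
  "weak_pderiv f j G \<longleftrightarrow> (\<forall>\<phi>. test_fun \<phi> \<longrightarrow>
     integral unit_cube (\<lambda>x. f x * pderiv_j \<phi> j x) = - integral unit_cube (\<lambda>x. G x * \<phi> x))"

definition W1p_bounded :: "real \<Rightarrow> real \<Rightarrow> (real^'d \<Rightarrow> real^'d) \<Rightarrow> bool" where
  "W1p_bounded p M v \<longleftrightarrow> periodic_fun v \<and>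
     (\<forall>i. (\<lambda>x. v x $ i) \<in> borel_measurable (lebesgue_on unit_cube) \<and>
          (\<integral>\<^sup>+x. ennreal (\<bar>v x $ i\<bar> powr p) \<partial>lebesgue_on unit_cube) \<le> ennreal M) \<and>
     (\<forall>i j. \<exists>G. G \<in> borel_measurable (lebesgue_on unit_cube) \<and>
          (\<integral>\<^sup>+x. ennreal (\<bar>G x\<bar> powr p) \<partial>lebesgue_on unit_cube) \<le> ennreal M \<and>
          weak_pderiv (\<lambda>x. v x $ i) j G)"

definition Linf_W1p :: "real \<Rightarrow> (real \<Rightarrow> real^'d \<Rightarrow> real^'d) \<Rightarrow> bool" where
  "Linf_W1p p u \<longleftrightarrow> (\<forall>t. periodic_fun (u t)) \<and>
     case_prod u \<in> borel_measurable (lborel \<Otimes>\<^sub>M lborel) \<and>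
     (\<exists>M. AE t in lborel. t \<ge> 0 \<longrightarrow> W1p_bounded p M (u t))"

definition div_free :: "(real \<Rightarrow> real^'d \<Rightarrow> real^'d) \<Rightarrow> bool" where
  "div_free u \<longleftrightarrow> (AE t in lborel. t \<ge> 0 \<longrightarrow> (\<forall>\<phi>. test_fun \<phi> \<longrightarrow>
      integral unit_cube (\<lambda>x. \<Sum>i\<in>UNIV. u t x $ i * pderiv_j \<phi> i x) = 0))"

text \<open>gamma is an absolutely continuous solution (written in integral form, lifted to
  real^'d) of gamma' = u(t, gamma), gamma(0) = x on [0,\<infinity>).\<close>
definition ode_solution :: "(real \<Rightarrow> real^'d \<Rightarrow> real^'d) \<Rightarrow> real^'d \<Rightarrow> (real \<Rightarrow> real^'d) \<Rightarrow> bool" where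
  "ode_solution u x \<gamma> \<longleftrightarrow> \<gamma> 0 = x \<and>
     (\<forall>t\<ge>0. (\<lambda>s. u s (\<gamma> s)) absolutely_integrable_on {0..t} \<and>
             \<gamma> t = x + integral {0..t} (\<lambda>s. u s (\<gamma> s)))"

definition measure_preserving_map :: "'a measure \<Rightarrow> ('a \<Rightarrow> 'a) \<Rightarrow> bool" where
  "measure_preserving_map M f \<longleftrightarrow> f \<in> measurable M M \<and> distr M M f = M"

text \<open>X is the (lifted) DiPerna--Lions measure-preserving flow of u: the torus flow map
  is Phi_t = torus_proj o X t.\<close>
definition DL_flow :: "(real \<Rightarrow> real^'d \<Rightarrow> real^'d) \<Rightarrow> (real \<Rightarrow> real^'d \<Rightarrow> real^'d) \<Rightarrow> bool" where
  "DL_flow u X \<longleftrightarrow>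
     (AE x in lebesgue_on unit_cube. ode_solution u x (\<lambda>t. X t x) \<and>
        (\<forall>\<gamma>. ode_solution u x \<gamma> \<longrightarrow> (\<forall>t\<ge>0. \<gamma> t = X t x))) \<and>
     (\<forall>t\<ge>0. measure_preserving_map (lebesgue_on unit_cube) (\<lambda>x. torus_proj (X t x)) \<and>
        (\<exists>\<Psi>. measure_preserving_map (lebesgue_on unit_cube) \<Psi> \<and>
           (AE x in lebesgue_on unit_cube. \<Psi> (torus_proj (X t x)) = x) \<and>
           (AE y in lebesgue_on unit_cube. torus_proj (X t (\<Psi> y)) = y)))"

text \<open>g is (a representative of) 1_D o Phi_t^{-1}: the a.e.-unique measurable g with
  g o Phi_t = 1_D a.e.\<close>
definition transported :: "(real \<Rightarrow> real^'d \<Rightarrow> real^'d) \<Rightarrow> (real^'d) set \<Rightarrow> real \<Rightarrow> (real^'d \<Rightarrow> real) \<Rightarrow> bool" where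
  "transported X D t g \<longleftrightarrow> g \<in> borel_measurable (lebesgue_on unit_cube) \<and>
     (AE x in lebesgue_on unit_cube. g (torus_proj (X t x)) = indicator D x)"

definition precompact_L2 :: "(real^'d \<Rightarrow> real) set \<Rightarrow> bool" where
  "precompact_L2 F \<longleftrightarrow> (\<forall>f::nat \<Rightarrow> real^'d \<Rightarrow> real. (\<forall>n. f n \<in> F) \<longrightarrow>
     (\<exists>r h. strict_mono r \<and> h \<in> borel_measurable (lebesgue_on unit_cube) \<and>
        (\<integral>\<^sup>+x. ennreal ((h x)\<^sup>2) \<partial>lebesgue_on unit_cube) < \<infinity> \<and>
        (\<lambda>n. \<integral>\<^sup>+x. ennreal ((f (r n) x - h x)\<^sup>2) \<partial>lebesgue_on unit_cube) \<longlonglongrightarrow> 0))"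

definition N_family :: "(real \<Rightarrow> real^'d \<Rightarrow> real^'d) \<Rightarrow> (real^'d) set set" where
  "N_family X = {D. D \<in> sets (lebesgue_on unit_cube) \<and>
     precompact_L2 {g. \<exists>t\<ge>0. transported X D t g}}"

end

theory Submission
  imports Defs "HOL-Library.Diagonal_Subsequence"
begin

abbreviation LM :: "(real^'d) measure" where "LM \<equiv> lebesgue_on unit_cube"

definition d2 :: "(real^'d \<Rightarrow> real) \<Rightarrow> (real^'d \<Rightarrow> real) \<Rightarrow> ennreal" where
  "d2 f g = (\<integral>\<^sup>+x. ennreal ((f x - g x)\<^sup>2) \<partial>LM)"

lemma space_LM[simp]: "space LM = unit_cube"
  by simp

lemma unit_cube_borel: "unit_cube \<in> sets (borel :: (real^'d) measure)"
  unfolding unit_cube_def by measurable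

lemma unit_cube_leb: "unit_cube \<in> sets lebesgue"
  by (rule sets_completionI_sets) (simp add: unit_cube_borel)

lemma unit_cube_lmeas: "unit_cube \<in> lmeasurable"
proof (rule bounded_set_imp_lmeasurable)
  show "bounded (unit_cube :: (real^'d) set)"
    by (rule bounded_subset[OF bounded_cbox[of 0 "\<chi> i. 1"]]) (auto simp: unit_cube_def mem_box_cart less_imp_le)
qed (rule unit_cube_leb)

lemma finite_LM: "finite_measure LM"
  by (rule finite_measure_lebesgue_on[OF unit_cube_lmeas])

lemma d2_sym: "d2 f g = d2 g f"
  unfolding d2_def by (simp add: power2_commute)

lemma sq_tri: "((a::real) - c)\<^sup>2 \<le> 2 * (a - b)\<^sup>2 + 2 * (b - c)\<^sup>2"
  by (smt (verit) sum_squares_ge_zero power2_diff power2_sum zero_le_power2 power2_eq_square)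

lemma d2_tri:
  assumes [measurable]: "f \<in> borel_measurable LM" "g \<in> borel_measurable LM" "h \<in> borel_measurable LM"
  shows "d2 f h \<le> 2 * d2 f g + 2 * d2 g h"
proof -
  have "d2 f h \<le> (\<integral>\<^sup>+x. 2 * ennreal ((f x - g x)\<^sup>2) + 2 * ennreal ((g x - h x)\<^sup>2) \<partial>LM)"
    unfolding d2_def
  proof (rule nn_integral_mono)
    fix x
    have "ennreal ((f x - h x)\<^sup>2) \<le> ennreal (2 * (f x - g x)\<^sup>2 + 2 * (g x - h x)\<^sup>2)"
      by (rule ennreal_leI) (rule sq_tri)
    also have "\<dots> = 2 * ennreal ((f x - g x)\<^sup>2) + 2 * ennreal ((g x - h x)\<^sup>2)"
      by (simp add: ennreal_plus ennreal_mult)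
    finally show "ennreal ((f x - h x)\<^sup>2) \<le> \<dots>" .
  qed
  also have "\<dots> = 2 * d2 f g + 2 * d2 g h"
    unfolding d2_def by (simp add: nn_integral_add nn_integral_cmult)
  finally show ?thesis .
qed

lemma mp_transfer:
  assumes mp: "measure_preserving_map LM \<phi>" and F: "F \<in> borel_measurable LM"
  shows "(\<integral>\<^sup>+y. F y \<partial>LM) = (\<integral>\<^sup>+x. F (\<phi> x) \<partial>LM)"
proof -
  have phi: "\<phi> \<in> measurable LM LM" and eq: "distr LM LM \<phi> = LM"
    using mp unfolding measure_preserving_map_def by auto
  have "(\<integral>\<^sup>+y. F y \<partial>LM) = (\<integral>\<^sup>+y. F y \<partial>(distr LM LM \<phi>))"
    by (simp only: eq)
  also have "\<dots> = (\<integral>\<^sup>+x. F (\<phi> x) \<partial>LM)"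
    by (rule nn_integral_distr[OF phi]) (simp only: eq F)
  finally show ?thesis .
qed

lemma DL_mp:
  assumes "DL_flow u X" "t \<ge> 0"
  shows "measure_preserving_map LM (\<lambda>x. torus_proj (X t x))"
  using assms unfolding DL_flow_def by auto

lemma GL:
  assumes DL: "DL_flow u X" and t: "t \<ge> 0"
    and g: "transported X D t g" and g': "transported X E t g'"
  shows "d2 g g' = (\<integral>\<^sup>+x. ennreal ((indicator D x - indicator E x)\<^sup>2) \<partial>LM)"
proof -
  have [measurable]: "g \<in> borel_measurable LM" "g' \<in> borel_measurable LM"
    using g g' unfolding transported_def by auto
  have "d2 g g' = (\<integral>\<^sup>+x. ennreal ((g (torus_proj (X t x)) - g' (torus_proj (X t x)))\<^sup>2) \<partial>LM)"
    unfolding d2_def by (rule mp_transfer[OF DL_mp[OF DL t]]) measurable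
  also have "\<dots> = (\<integral>\<^sup>+x. ennreal ((indicator D x - indicator E x)\<^sup>2) \<partial>LM)"
  proof (rule nn_integral_cong_AE)
    have "AE x in LM. g (torus_proj (X t x)) = indicator D x"
         "AE x in LM. g' (torus_proj (X t x)) = indicator E x"
      using g g' unfolding transported_def by auto
    then show "AE x in LM. ennreal ((g (torus_proj (X t x)) - g' (torus_proj (X t x)))\<^sup>2)
        = ennreal ((indicator D x - indicator E x)\<^sup>2)"
      by eventually_elim simp
  qed
  finally show ?thesis .
qed

lemma EX:
  assumes DL: "DL_flow u X" and t: "t \<ge> 0" and D: "D \<in> sets LM"
  shows "\<exists>g. transported X D t g \<and> (\<forall>x. g x = 0 \<or> g x = 1)"
proof -
  obtain \<Psi> where mp: "measure_preserving_map LM \<Psi>"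
    and ae: "AE x in LM. \<Psi> (torus_proj (X t x)) = x"
    using DL t unfolding DL_flow_def by blast
  have psi: "\<Psi> \<in> measurable LM LM" using mp unfolding measure_preserving_map_def by auto
  define g where "g = (\<lambda>y. indicator D (\<Psi> y) :: real)"
  have "g \<in> borel_measurable LM"
    unfolding g_def by (rule measurable_compose[OF psi]) (rule borel_measurable_indicator[OF D])
  moreover have "AE x in LM. g (torus_proj (X t x)) = indicator D x"
    using ae by eventually_elim (simp add: g_def)
  ultimately have "transported X D t g" unfolding transported_def by auto
  moreover have "\<forall>x. g x = 0 \<or> g x = 1" unfolding g_def by (simp add: indicator_def)
  ultimately show ?thesis by blast
qed

lemma pc_iff: "precompact_L2 F \<longleftrightarrow> (\<forall>f::nat \<Rightarrow> real^'d \<Rightarrow> real. (\<forall>n. f n \<in> F) \<longrightarrow>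
     (\<exists>r h. strict_mono r \<and> h \<in> borel_measurable LM \<and>
        (\<integral>\<^sup>+x. ennreal ((h x)\<^sup>2) \<partial>LM) < \<infinity> \<and> (\<lambda>n. d2 (f (r n)) h) \<longlonglongrightarrow> 0))"
  by (simp add: precompact_L2_def d2_def)

lemma eps22: "0 < (r::real) \<Longrightarrow> 22 * ennreal (r / 44) < ennreal r"
proof -
  assume r: "0 < r"
  have "ennreal 22 * ennreal (r / 44) = ennreal (22 * (r / 44))"
    by (rule ennreal_mult[symmetric]) (use r in auto)
  then have "22 * ennreal (r / 44) = ennreal (22 * (r / 44))" by simp
  also have "\<dots> < ennreal r" using r by (simp add: ennreal_less_iff)
  finally show ?thesis .
qed

lemma RL:
  fixes F F' :: "(real^'d \<Rightarrow> real) set"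
  assumes pc: "precompact_L2 F'"
    and FF: "\<And>f. f \<in> F \<Longrightarrow> f \<in> borel_measurable LM \<and> (\<exists>f'\<in>F'. f' \<in> borel_measurable LM \<and> d2 f f' = 0)"
  shows "precompact_L2 F"
  unfolding pc_iff
proof (intro allI impI)
  fix f :: "nat \<Rightarrow> real^'d \<Rightarrow> real" assume fF: "\<forall>n. f n \<in> F"
  define f' where "f' n = (SOME g. g \<in> F' \<and> g \<in> borel_measurable LM \<and> d2 (f n) g = 0)" for n
  have f': "f' n \<in> F' \<and> f' n \<in> borel_measurable LM \<and> d2 (f n) (f' n) = 0" for n
    proof -
    have "f n \<in> F" using fF by blast
    then have "\<exists>g. g \<in> F' \<and> g \<in> borel_measurable LM \<and> d2 (f n) g = 0" using FF by blast
    then show ?thesis unfolding f'_def by (rule someI_ex)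
  qed
  obtain r h where r: "strict_mono r" and hm: "h \<in> borel_measurable LM"
    and hi: "(\<integral>\<^sup>+x. ennreal ((h x)\<^sup>2) \<partial>LM) < \<infinity>" and lim: "(\<lambda>n. d2 (f' (r n)) h) \<longlonglongrightarrow> 0"
    using pc f' unfolding pc_iff by blast
  have "(\<lambda>n. d2 (f (r n)) h) \<longlonglongrightarrow> 0"
  proof (rule tendsto_sandwich[of "\<lambda>_. 0" _ _ "\<lambda>n. 2 * d2 (f' (r n)) h"])
    show "\<forall>\<^sub>F n in sequentially. 0 \<le> d2 (f (r n)) h" by simp
    show "\<forall>\<^sub>F n in sequentially. d2 (f (r n)) h \<le> 2 * d2 (f' (r n)) h"
    proof (intro always_eventually allI)
      fix n
      have "d2 (f (r n)) h \<le> 2 * d2 (f (r n)) (f' (r n)) + 2 * d2 (f' (r n)) h"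
        proof (rule d2_tri)
        show "f (r n) \<in> borel_measurable LM" using FF fF by blast
        show "f' (r n) \<in> borel_measurable LM" using f' by blast
      qed (rule hm)
      then show "d2 (f (r n)) h \<le> 2 * d2 (f' (r n)) h" using f' by simp
    qed
    show "(\<lambda>_. 0) \<longlonglongrightarrow> (0::ennreal)" by simp
    show "(\<lambda>n. 2 * d2 (f' (r n)) h) \<longlonglongrightarrow> 0"
      using ennreal_tendsto_cmult[OF _ lim, of 2] by simp
  qed
  then show "\<exists>r h. strict_mono r \<and> h \<in> borel_measurable LM \<and>
        (\<integral>\<^sup>+x. ennreal ((h x)\<^sup>2) \<partial>LM) < \<infinity> \<and> (\<lambda>n. d2 (f (r n)) h) \<longlonglongrightarrow> 0"
    using r hm hi by blast
qed

lemma AL: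
  fixes F :: "(real^'d \<Rightarrow> real) set" and G :: "nat \<Rightarrow> (real^'d \<Rightarrow> real) set" and e :: "nat \<Rightarrow> ennreal"
  assumes Fm: "\<And>f. f \<in> F \<Longrightarrow> f \<in> borel_measurable LM"
    and F01: "\<And>f x. f \<in> F \<Longrightarrow> f x = 0 \<or> f x = 1"
    and Gpc: "\<And>k. precompact_L2 (G k)"
    and Gm: "\<And>k g. g \<in> G k \<Longrightarrow> g \<in> borel_measurable LM"
    and app: "\<And>f k. f \<in> F \<Longrightarrow> \<exists>g\<in>G k. d2 f g \<le> e k"
    and e: "e \<longlonglongrightarrow> 0"
  shows "precompact_L2 F"
  unfolding pc_iff
proof (intro allI impI)
  fix f :: "nat \<Rightarrow> real^'d \<Rightarrow> real" assume fF: "\<forall>n. f n \<in> F"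
  define g where "g k n = (SOME y. y \<in> G k \<and> d2 (f n) y \<le> e k)" for k n
  have g: "g k n \<in> G k \<and> d2 (f n) (g k n) \<le> e k" for k n
  proof -
    have "f n \<in> F" using fF by blast
    then have "\<exists>y. y \<in> G k \<and> d2 (f n) y \<le> e k" using app by blast
    then show ?thesis unfolding g_def by (rule someI_ex)
  qed
  have gm: "g k n \<in> borel_measurable LM" for k n using g Gm by blast
  define P where "P = (\<lambda>k (s::nat \<Rightarrow> nat). \<exists>h. h \<in> borel_measurable LM \<and> (\<lambda>n. d2 (g k (s n)) h) \<longlonglongrightarrow> 0)"
  interpret subseqs P
  proof
    fix k and s :: "nat \<Rightarrow> nat" assume "strict_mono s"
    have "\<forall>n. g k (s n) \<in> G k" using g by blast
    then have "\<exists>r h. strict_mono r \<and> h \<in> borel_measurable LM \<and>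
        (\<integral>\<^sup>+x. ennreal ((h x)\<^sup>2) \<partial>LM) < \<infinity> \<and> (\<lambda>n. d2 (g k (s (r n))) h) \<longlonglongrightarrow> 0"
      using Gpc[of k, unfolded pc_iff, rule_format, of "\<lambda>n. g k (s n)"] by blast
    then obtain r h where r: "strict_mono r" and hm: "h \<in> borel_measurable LM"
      and lim: "(\<lambda>n. d2 (g k (s (r n))) h) \<longlonglongrightarrow> 0" by blast
    have "P k (s \<circ> r)" unfolding P_def using hm lim by (auto simp: o_def)
    then show "\<exists>r'. strict_mono r' \<and> P k (s \<circ> r')" using r by blast
  qed
  have Pk: "P k (diagseq \<circ> (+) (Suc k))" for k
  proof (rule diagseq_holds)
    fix r s n assume r: "strict_mono (r::nat \<Rightarrow> nat)" and "P n s"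
    then obtain h where hm: "h \<in> borel_measurable LM" and lim: "(\<lambda>m. d2 (g n (s m)) h) \<longlonglongrightarrow> 0"
      unfolding P_def by blast
    have "((\<lambda>m. d2 (g n (s m)) h) \<circ> r) \<longlonglongrightarrow> 0" by (rule LIMSEQ_subseq_LIMSEQ[OF lim r])
    then show "P n (s \<circ> r)" unfolding P_def using hm by (auto simp: o_def)
  qed
  define s where "s n = f (diagseq n)" for n
  have sm[measurable]: "s n \<in> borel_measurable LM" for n using Fm fF unfolding s_def by blast
  have s01: "s n x = 0 \<or> s n x = 1" for n x using F01 fF unfolding s_def by blast
  have C: "\<exists>N. \<forall>i\<ge>N. \<forall>j\<ge>N. d2 (s i) (s j) \<le> 22 * ennreal \<epsilon>" if \<epsilon>: "0 < \<epsilon>" for \<epsilon>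
  proof -
    let ?E = "ennreal \<epsilon>"
    have "?E > 0" using \<epsilon> by simp
    from order_tendstoD(2)[OF e this] obtain k where ek: "e k < ?E"
      by (auto simp: eventually_sequentially)
    from Pk[of k] obtain h where hm: "h \<in> borel_measurable LM"
      and lim: "(\<lambda>n. d2 (g k (diagseq (Suc k + n))) h) \<longlonglongrightarrow> 0"
      unfolding P_def by (auto simp: o_def)
    from order_tendstoD(2)[OF lim \<open>?E > 0\<close>] obtain N0 where
      N0: "\<And>n. n \<ge> N0 \<Longrightarrow> d2 (g k (diagseq (Suc k + n))) h < ?E"
      by (auto simp: eventually_sequentially)
    have gh: "d2 (g k (diagseq i)) h \<le> ?E" if "i \<ge> Suc k + N0" for i
    proof -
      have "i = Suc k + (i - Suc k)" using that by simp
      then have "d2 (g k (diagseq i)) h = d2 (g k (diagseq (Suc k + (i - Suc k)))) h" by simp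
      also have "\<dots> < ?E" using that by (intro N0) simp
      finally show ?thesis by simp
    qed
    have sg: "d2 (s i) (g k (diagseq i)) \<le> ?E" for i
      using g[of k "diagseq i"] ek unfolding s_def by (meson order.trans less_imp_le)
    show ?thesis
    proof (intro exI allI impI)
      fix i j assume i: "i \<ge> Suc k + N0" and j: "j \<ge> Suc k + N0"
      let ?gi = "g k (diagseq i)" and ?gj = "g k (diagseq j)"
      have t1: "d2 (s i) (s j) \<le> 2 * d2 (s i) ?gi + 2 * d2 ?gi (s j)"
        by (rule d2_tri[OF sm gm sm])
      have t2: "d2 ?gi (s j) \<le> 2 * d2 ?gi ?gj + 2 * d2 ?gj (s j)"
        by (rule d2_tri[OF gm gm sm])
      have t3: "d2 ?gi ?gj \<le> 2 * d2 ?gi h + 2 * d2 h ?gj"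
        by (rule d2_tri[OF gm hm gm])
      have b1: "d2 (s i) ?gi \<le> ?E" by (rule sg)
      have b2: "d2 ?gj (s j) \<le> ?E" using sg[of j] by (simp add: d2_sym)
      have b3: "d2 ?gi h \<le> ?E" using gh i by blast
      have b4: "d2 h ?gj \<le> ?E" using gh[of j] j by (simp add: d2_sym)
      have "d2 ?gi ?gj \<le> 2 * ?E + 2 * ?E"
        using t3 b3 b4 by (meson add_mono mult_left_mono order_trans zero_le)
      then have "d2 ?gi (s j) \<le> 2 * (2 * ?E + 2 * ?E) + 2 * ?E"
        using t2 b2 by (meson add_mono mult_left_mono order_trans zero_le)
      then have "d2 (s i) (s j) \<le> 2 * ?E + 2 * (2 * (2 * ?E + 2 * ?E) + 2 * ?E)"
        using t1 b1 by (meson add_mono mult_left_mono order_trans zero_le)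
      also have "\<dots> = 22 * ?E" by (simp add: algebra_simps, simp only: distrib_left[symmetric], simp)
      finally show "d2 (s i) (s j) \<le> 22 * ?E" .
    qed
  qed
  show "\<exists>r h. strict_mono r \<and> h \<in> borel_measurable LM \<and>
        (\<integral>\<^sup>+x. ennreal ((h x)\<^sup>2) \<partial>LM) < \<infinity> \<and> (\<lambda>n. d2 (f (r n)) h) \<longlonglongrightarrow> 0"
  proof -
    have integ: "integrable LM (s n)" for n
    proof (rule finite_measure.integrable_const_bound[OF finite_LM, of _ 1])
      have "\<forall>x. norm (s n x) \<le> 1"
      proof
        fix x show "norm (s n x) \<le> 1" using s01[of n x] by auto
      qed
      then show "AE x in LM. norm (s n x) \<le> 1" by (rule always_eventually)
    qed (rule sm)
    have L1: "(LINT x|LM. norm (s i x - s j x)) = enn2real (d2 (s i) (s j))" for i j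
    proof -
      have "(LINT x|LM. norm (s i x - s j x)) = enn2real (\<integral>\<^sup>+x. ennreal (norm (s i x - s j x)) \<partial>LM)"
        by (rule integral_eq_nn_integral) (use sm in auto)
      also have "(\<integral>\<^sup>+x. ennreal (norm (s i x - s j x)) \<partial>LM) = d2 (s i) (s j)"
        unfolding d2_def
      proof (rule nn_integral_cong)
        fix x
        show "ennreal (norm (s i x - s j x)) = ennreal ((s i x - s j x)\<^sup>2)"
          using s01[of i x] s01[of j x] by auto
      qed
      finally show ?thesis .
    qed
    have cauchy: "\<exists>N. \<forall>i\<ge>N. \<forall>j\<ge>N. (LINT x|LM. norm (s i x - s j x)) < r" if r: "r > 0" for r
    proof -
      obtain N where N: "\<And>i j. i \<ge> N \<Longrightarrow> j \<ge> N \<Longrightarrow> d2 (s i) (s j) \<le> 22 * ennreal (r / 44)"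
        using C[of "r / 44"] r by auto
      have "(LINT x|LM. norm (s i x - s j x)) < r" if "i \<ge> N" "j \<ge> N" for i j
      proof -
        have lt: "d2 (s i) (s j) < ennreal r" using N[OF that] eps22[OF r] by (rule order.strict_trans1)
        have "enn2real (d2 (s i) (s j)) < r"
        proof (cases "d2 (s i) (s j)")
          case (real q)
          then show ?thesis using lt r by (simp add: ennreal_less_iff)
        next
          case top
          then show ?thesis using lt by simp
        qed
        then show ?thesis unfolding L1 .
      qed
      then show ?thesis by blast
    qed
    obtain r2 where r2: "strict_mono r2" and aec: "AE x in LM. Cauchy (\<lambda>i. s (r2 i) x)"
      using cauchy_L1_AE_cauchy_subseq[OF integ cauchy] by blast
    define h where "h x = lim (\<lambda>i. s (r2 i) x)" for x
    have hm: "h \<in> borel_measurable LM" unfolding h_def by measurable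
    have conv: "AE x in LM. (\<lambda>i. s (r2 i) x) \<longlonglongrightarrow> h x"
      using aec by eventually_elim (simp add: h_def Cauchy_convergent_iff convergent_LIMSEQ_iff)
    have B: "\<exists>N. \<forall>n\<ge>N. d2 (s (r2 n)) h \<le> 22 * ennreal \<epsilon>" if \<epsilon>: "0 < \<epsilon>" for \<epsilon>
    proof -
      obtain N where N: "\<And>i j. i \<ge> N \<Longrightarrow> j \<ge> N \<Longrightarrow> d2 (s i) (s j) \<le> 22 * ennreal \<epsilon>"
        using C[OF \<epsilon>] by auto
      have "d2 (s (r2 n)) h \<le> 22 * ennreal \<epsilon>" if n: "n \<ge> N" for n
      proof -
        have "d2 (s (r2 n)) h = (\<integral>\<^sup>+x. liminf (\<lambda>m. ennreal ((s (r2 n) x - s (r2 m) x)\<^sup>2)) \<partial>LM)"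
          unfolding d2_def
        proof (rule nn_integral_cong_AE)
          show "AE x in LM. ennreal ((s (r2 n) x - h x)\<^sup>2) = liminf (\<lambda>m. ennreal ((s (r2 n) x - s (r2 m) x)\<^sup>2))"
            using conv
          proof eventually_elim
            case (elim x)
            have "(\<lambda>m. ennreal ((s (r2 n) x - s (r2 m) x)\<^sup>2)) \<longlonglongrightarrow> ennreal ((s (r2 n) x - h x)\<^sup>2)"
              by (intro tendsto_intros elim)
            then have "liminf (\<lambda>m. ennreal ((s (r2 n) x - s (r2 m) x)\<^sup>2)) = ennreal ((s (r2 n) x - h x)\<^sup>2)"
              by (rule lim_imp_Liminf[OF sequentially_bot])
            then show ?case by (rule sym)
          qed
        qed
        also have "\<dots> \<le> liminf (\<lambda>m. d2 (s (r2 n)) (s (r2 m)))"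
          unfolding d2_def by (rule nn_integral_liminf) measurable
        also have "\<dots> \<le> limsup (\<lambda>m. d2 (s (r2 n)) (s (r2 m)))"
          by (rule Liminf_le_Limsup) simp
        also have "\<dots> \<le> 22 * ennreal \<epsilon>"
        proof (rule Limsup_bounded)
          show "\<forall>\<^sub>F m in sequentially. d2 (s (r2 n)) (s (r2 m)) \<le> 22 * ennreal \<epsilon>"
            unfolding eventually_sequentially
          proof (intro exI allI impI)
            fix m assume "m \<ge> N"
            moreover have "m \<le> r2 m" "n \<le> r2 n" using r2 by (auto intro: seq_suble)
            ultimately show "d2 (s (r2 n)) (s (r2 m)) \<le> 22 * ennreal \<epsilon>" using n by (intro N) auto
          qed
        qed
        finally show ?thesis .
      qed
      then show ?thesis by blast
    qed
    have lim: "(\<lambda>n. d2 (f ((diagseq \<circ> r2) n)) h) \<longlonglongrightarrow> 0"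
    proof (rule tendsto_zero_ennreal)
      fix r :: real assume r: "0 < r"
      obtain N where N: "\<And>n. n \<ge> N \<Longrightarrow> d2 (s (r2 n)) h \<le> 22 * ennreal (r / 44)"
        using B[of "r / 44"] r by auto
      show "\<forall>\<^sub>F n in sequentially. d2 (f ((diagseq \<circ> r2) n)) h < ennreal r"
        unfolding eventually_sequentially
      proof (intro exI allI impI)
        fix n assume "N \<le> n"
        then have "d2 (s (r2 n)) h \<le> 22 * ennreal (r / 44)" by (rule N)
        then show "d2 (f ((diagseq \<circ> r2) n)) h < ennreal r"
          using eps22[OF r] unfolding s_def o_def by (rule order.strict_trans1)
      qed
    qed
    have fin: "(\<integral>\<^sup>+x. ennreal ((h x)\<^sup>2) \<partial>LM) < \<infinity>"
    proof -
      obtain N where N: "\<And>n. n \<ge> N \<Longrightarrow> d2 (s (r2 n)) h \<le> 22 * ennreal 1"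
        using B[of 1] by auto
      let ?z = "\<lambda>x::real^'d. 0::real"
      have "(\<integral>\<^sup>+x. ennreal ((h x)\<^sup>2) \<partial>LM) = d2 h ?z" unfolding d2_def by simp
      also have "\<dots> \<le> 2 * d2 h (s (r2 N)) + 2 * d2 (s (r2 N)) ?z"
        by (rule d2_tri[OF hm sm]) simp
      also have "\<dots> < \<infinity>"
      proof -
        have a: "d2 h (s (r2 N)) \<le> 22" using N[of N] by (simp add: d2_sym)
        have "d2 (s (r2 N)) ?z \<le> (\<integral>\<^sup>+x. 1 \<partial>(LM :: (real^'d) measure))"
          unfolding d2_def
        proof (rule nn_integral_mono)
          fix x show "ennreal ((s (r2 N) x - 0)\<^sup>2) \<le> 1" using s01[of "r2 N" x] by auto
        qed
        also have "\<dots> = emeasure (LM :: (real^'d) measure) (space LM)" by simp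
        also have "\<dots> < \<infinity>" using finite_measure.emeasure_finite[OF finite_LM] by (simp add: less_top)
        finally have b: "d2 (s (r2 N)) ?z < \<infinity>" .
        have a': "d2 h (s (r2 N)) < \<infinity>" using a by (rule le_less_trans) simp
        have "2 * d2 h (s (r2 N)) < \<infinity>" using a' by (simp add: ennreal_mult_less_top)
        moreover have "2 * d2 (s (r2 N)) ?z < \<infinity>" using b by (simp add: ennreal_mult_less_top)
        ultimately show ?thesis by simp
      qed
      finally show ?thesis .
    qed
    show ?thesis
      by (rule exI[of _ "diagseq \<circ> r2"], rule exI[of _ h]) (intro conjI strict_mono_o subseq_diagseq r2 hm fin lim)
  qed
qed

lemma sq_max: "(max a b - max c d)\<^sup>2 \<le> ((a::real) - c)\<^sup>2 + (b - d)\<^sup>2"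
proof -
  have 1: "\<bar>max a b - max c d\<bar> \<le> max \<bar>a - c\<bar> \<bar>b - d\<bar>" by (auto simp: max_def abs_if)
  have "(max a b - max c d)\<^sup>2 = \<bar>max a b - max c d\<bar>\<^sup>2" by simp
  also have "\<dots> \<le> (max \<bar>a - c\<bar> \<bar>b - d\<bar>)\<^sup>2" by (rule power_mono[OF 1]) simp
  also have "\<dots> \<le> (a - c)\<^sup>2 + (b - d)\<^sup>2" by (auto simp: max_def)
  finally show ?thesis .
qed

lemma d2_max:
  assumes [measurable]: "f \<in> borel_measurable LM" "g \<in> borel_measurable LM"
    "f' \<in> borel_measurable LM" "g' \<in> borel_measurable LM"
  shows "d2 (\<lambda>x. max (f x) (g x)) (\<lambda>x. max (f' x) (g' x)) \<le> d2 f f' + d2 g g'"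
proof -
  have "d2 (\<lambda>x. max (f x) (g x)) (\<lambda>x. max (f' x) (g' x))
      \<le> (\<integral>\<^sup>+x. ennreal ((f x - f' x)\<^sup>2) + ennreal ((g x - g' x)\<^sup>2) \<partial>LM)"
    unfolding d2_def
  proof (rule nn_integral_mono)
    fix x
    have "ennreal ((max (f x) (g x) - max (f' x) (g' x))\<^sup>2) \<le> ennreal ((f x - f' x)\<^sup>2 + (g x - g' x)\<^sup>2)"
      by (rule ennreal_leI) (rule sq_max)
    then show "ennreal ((max (f x) (g x) - max (f' x) (g' x))\<^sup>2) \<le> ennreal ((f x - f' x)\<^sup>2) + ennreal ((g x - g' x)\<^sup>2)"
      by (simp add: ennreal_plus)
  qed
  also have "\<dots> = d2 f f' + d2 g g'"
    unfolding d2_def by (simp add: nn_integral_add)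
  finally show ?thesis .
qed

lemma d2_fin_aux:
  fixes h g :: "real^'d \<Rightarrow> real"
  assumes hm: "h \<in> borel_measurable LM" and fin: "d2 h g < \<infinity>" and gm: "g \<in> borel_measurable LM"
    and gb: "\<And>x. \<bar>g x\<bar> \<le> 1"
  shows "(\<integral>\<^sup>+x. ennreal ((h x)\<^sup>2) \<partial>LM) < \<infinity>"
proof -
  let ?z = "\<lambda>x::real^'d. 0::real"
  have "(\<integral>\<^sup>+x. ennreal ((h x)\<^sup>2) \<partial>LM) = d2 h ?z" unfolding d2_def by simp
  also have "\<dots> \<le> 2 * d2 h g + 2 * d2 g ?z"
    by (rule d2_tri[OF hm gm]) simp
  also have "\<dots> < \<infinity>"
  proof -
    have "d2 g ?z \<le> (\<integral>\<^sup>+x. 1 \<partial>(LM :: (real^'d) measure))"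
      unfolding d2_def
    proof (rule nn_integral_mono)
      fix x have "(g x)\<^sup>2 \<le> 1" using gb[of x] by (simp add: abs_square_le_1)
      then show "ennreal ((g x - 0)\<^sup>2) \<le> 1" by (simp add: ennreal_le_1)
    qed
    also have "\<dots> = emeasure (LM :: (real^'d) measure) (space LM)" by simp
    also have "\<dots> < \<infinity>" using finite_measure.emeasure_finite[OF finite_LM] by (simp add: less_top)
    finally have b: "d2 g ?z < \<infinity>" .
    have "2 * d2 h g < \<infinity>" using fin by (simp add: ennreal_mult_less_top)
    moreover have "2 * d2 g ?z < \<infinity>" using b by (simp add: ennreal_mult_less_top)
    ultimately show ?thesis by simp
  qed
  finally show ?thesis .
qed

lemma N_sets: "D \<in> N_family X \<Longrightarrow> D \<in> sets LM"
  unfolding N_family_def by blast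

lemma N_pc: "D \<in> N_family X \<Longrightarrow> precompact_L2 {g. \<exists>t\<ge>0. transported X D t g}"
  unfolding N_family_def by blast

lemma transp_meas: "transported X D t g \<Longrightarrow> g \<in> borel_measurable LM"
  unfolding transported_def by blast

lemma N_empty:
  fixes X :: "real \<Rightarrow> real^'d \<Rightarrow> real^'d"
  assumes DL: "DL_flow u X"
  shows "{} \<in> N_family X"
  unfolding N_family_def
proof (intro CollectI conjI)
  show "{} \<in> sets LM" by simp
  show "precompact_L2 {g. \<exists>t\<ge>0. transported X {} t g}"
    unfolding pc_iff
  proof (intro allI impI)
    fix f :: "nat \<Rightarrow> real^'d \<Rightarrow> real" assume fF: "\<forall>n. f n \<in> {g. \<exists>t\<ge>0. transported X {} t g}"
    let ?z = "\<lambda>x::real^'d. 0::real"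
    have z: "d2 (f n) ?z = 0" for n
    proof -
      obtain t where t: "t \<ge> 0" and ft: "transported X {} t (f n)" using fF by blast
      have "transported X {} t ?z" unfolding transported_def by simp
      from GL[OF DL t ft this] show ?thesis by simp
    qed
    have "(\<integral>\<^sup>+x. ennreal ((?z x)\<^sup>2) \<partial>(LM :: (real^'d) measure)) < \<infinity>" by simp
    moreover have "(\<lambda>n. d2 (f (id n)) ?z) \<longlonglongrightarrow> 0" using z by simp
    ultimately show "\<exists>r h. strict_mono r \<and> h \<in> borel_measurable LM \<and>
        (\<integral>\<^sup>+x. ennreal ((h x)\<^sup>2) \<partial>LM) < \<infinity> \<and> (\<lambda>n. d2 (f (r n)) h) \<longlonglongrightarrow> 0"
      by (intro exI[of _ id] exI[of _ ?z]) (auto simp: strict_mono_def)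
  qed
qed

lemma N_compl:
  fixes X :: "real \<Rightarrow> real^'d \<Rightarrow> real^'d"
  assumes DL: "DL_flow u X" and D: "D \<in> N_family X"
  shows "unit_cube - D \<in> N_family X"
  unfolding N_family_def
proof (intro CollectI conjI)
  have Ds: "D \<in> sets LM" using N_sets[OF D] .
  then have Dsub: "D \<subseteq> unit_cube" using sets.sets_into_space by fastforce
  show "unit_cube - D \<in> sets LM" using Ds by (metis sets.compl_sets space_LM)
  show "precompact_L2 {g. \<exists>t\<ge>0. transported X (unit_cube - D) t g}"
    unfolding pc_iff
  proof (intro allI impI)
    fix f :: "nat \<Rightarrow> real^'d \<Rightarrow> real" assume fF: "\<forall>n. f n \<in> {g. \<exists>t\<ge>0. transported X (unit_cube - D) t g}"
    define f' where "f' n = (\<lambda>x. 1 - f n x)" for n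
    have f'T: "f' n \<in> {g. \<exists>t\<ge>0. transported X D t g}" for n
    proof -
      obtain t where t: "t \<ge> 0" and ft: "transported X (unit_cube - D) t (f n)" using fF by blast
      have [measurable]: "f n \<in> borel_measurable LM" using ft by (rule transp_meas)
      have "f' n \<in> borel_measurable LM" unfolding f'_def by measurable
      moreover have "AE x in LM. f' n (torus_proj (X t x)) = indicator D x"
      proof -
        have ae: "AE x in LM. f n (torus_proj (X t x)) = indicator (unit_cube - D) x"
          using ft unfolding transported_def by blast
        have sp: "AE x in LM. x \<in> unit_cube" by (metis AE_space space_LM)
        from ae sp show ?thesis
        proof eventually_elim
          case (elim x)
          then show ?case using Dsub by (auto simp: f'_def indicator_def)
        qed
      qed
      ultimately show ?thesis using t unfolding transported_def by blast
    qed
    obtain r h where r: "strict_mono r" and hm: "h \<in> borel_measurable LM"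
      and hi: "(\<integral>\<^sup>+x. ennreal ((h x)\<^sup>2) \<partial>LM) < \<infinity>" and lim: "(\<lambda>n. d2 (f' (r n)) h) \<longlonglongrightarrow> 0"
      using N_pc[OF D, unfolded pc_iff, rule_format, of f'] f'T by blast
    define h' where "h' = (\<lambda>x. 1 - h x)"
    have h'm: "h' \<in> borel_measurable LM" unfolding h'_def using hm by measurable
    have eq: "d2 (f (r n)) h' = d2 (f' (r n)) h" for n
      unfolding d2_def f'_def h'_def by (rule nn_integral_cong) (simp add: power2_commute algebra_simps)
    have "d2 h' (\<lambda>_. 1) = (\<integral>\<^sup>+x. ennreal ((h x)\<^sup>2) \<partial>LM)"
      unfolding d2_def h'_def by (rule nn_integral_cong) simp
    then have "(\<integral>\<^sup>+x. ennreal ((h' x)\<^sup>2) \<partial>LM) < \<infinity>"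
      using hi by (intro d2_fin_aux[OF h'm, of "\<lambda>_. 1"]) auto
    moreover have "(\<lambda>n. d2 (f (r n)) h') \<longlonglongrightarrow> 0" using lim eq by simp
    ultimately show "\<exists>r h. strict_mono r \<and> h \<in> borel_measurable LM \<and>
        (\<integral>\<^sup>+x. ennreal ((h x)\<^sup>2) \<partial>LM) < \<infinity> \<and> (\<lambda>n. d2 (f (r n)) h) \<longlonglongrightarrow> 0"
      using r h'm by blast
  qed
qed

lemma N_Un:
  fixes X :: "real \<Rightarrow> real^'d \<Rightarrow> real^'d"
  assumes DL: "DL_flow u X" and A: "A \<in> N_family X" and B: "B \<in> N_family X"
  shows "A \<union> B \<in> N_family X"
  unfolding N_family_def
proof (intro CollectI conjI)
  have As: "A \<in> sets LM" using N_sets[OF A] .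
  have Bs: "B \<in> sets LM" using N_sets[OF B] .
  show "A \<union> B \<in> sets LM" using As Bs by simp
  show "precompact_L2 {g. \<exists>t\<ge>0. transported X (A \<union> B) t g}"
    unfolding pc_iff
  proof (intro allI impI)
    fix f :: "nat \<Rightarrow> real^'d \<Rightarrow> real" assume fF: "\<forall>n. f n \<in> {g. \<exists>t\<ge>0. transported X (A \<union> B) t g}"
    define t where "t n = (SOME t. t \<ge> 0 \<and> transported X (A \<union> B) t (f n))" for n
    have t: "t n \<ge> 0 \<and> transported X (A \<union> B) (t n) (f n)" for n
      unfolding t_def by (rule someI_ex) (use fF in blast)
    define a where "a n = (SOME g. transported X A (t n) g \<and> (\<forall>x. g x = 0 \<or> g x = 1))" for n
    have a: "transported X A (t n) (a n)" for n
      unfolding a_def using someI_ex[OF EX[OF DL _ As, of "t n"]] t by blast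
    define b where "b n = (SOME g. transported X B (t n) g \<and> (\<forall>x. g x = 0 \<or> g x = 1))" for n
    have b: "transported X B (t n) (b n)" for n
      unfolding b_def using someI_ex[OF EX[OF DL _ Bs, of "t n"]] t by blast
    have am[measurable]: "a n \<in> borel_measurable LM" for n using a by (rule transp_meas)
    have bm[measurable]: "b n \<in> borel_measurable LM" for n using b by (rule transp_meas)
    have fm[measurable]: "f n \<in> borel_measurable LM" for n using t transp_meas by blast
    define m where "m n = (\<lambda>x. max (a n x) (b n x))" for n
    have mm[measurable]: "m n \<in> borel_measurable LM" for n unfolding m_def by measurable
    have mt: "transported X (A \<union> B) (t n) (m n)" for n
    proof -
      have aa: "AE x in LM. a n (torus_proj (X (t n) x)) = indicator A x"
        using a[of n] unfolding transported_def by blast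
      have bb: "AE x in LM. b n (torus_proj (X (t n) x)) = indicator B x"
        using b[of n] unfolding transported_def by blast
      have "AE x in LM. m n (torus_proj (X (t n) x)) = indicator (A \<union> B) x"
        using aa bb
      proof eventually_elim
        case (elim x)
        then show ?case by (auto simp: m_def indicator_def)
      qed
      then show ?thesis unfolding transported_def using mm by blast
    qed
    have fm0: "d2 (f n) (m n) = 0" for n
      using GL[OF DL _ conjunct2[OF t[of n]] mt[of n]] t by simp
    obtain r1 ha where r1: "strict_mono r1" and ham: "ha \<in> borel_measurable LM"
      and hai: "(\<integral>\<^sup>+x. ennreal ((ha x)\<^sup>2) \<partial>LM) < \<infinity>" and lima: "(\<lambda>n. d2 (a (r1 n)) ha) \<longlonglongrightarrow> 0"
      using N_pc[OF A, unfolded pc_iff, rule_format, of a] a t by blast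
    obtain r2 hb where r2: "strict_mono r2" and hbm: "hb \<in> borel_measurable LM"
      and hbi: "(\<integral>\<^sup>+x. ennreal ((hb x)\<^sup>2) \<partial>LM) < \<infinity>" and limb: "(\<lambda>n. d2 (b (r1 (r2 n))) hb) \<longlonglongrightarrow> 0"
      using N_pc[OF B, unfolded pc_iff, rule_format, of "\<lambda>n. b (r1 n)"] b t by blast
    define h where "h = (\<lambda>x. max (ha x) (hb x))"
    have hm: "h \<in> borel_measurable LM" unfolding h_def using ham hbm by measurable
    let ?z = "\<lambda>x::real^'d. 0::real"
    have "(\<integral>\<^sup>+x. ennreal ((h x)\<^sup>2) \<partial>LM) = d2 h (\<lambda>x. max (?z x) (?z x))"
      unfolding d2_def h_def by simp
    also have "\<dots> \<le> d2 ha ?z + d2 hb ?z"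
      unfolding h_def by (rule d2_max[OF ham hbm]) simp_all
    also have "\<dots> < \<infinity>" using hai hbi unfolding d2_def by simp
    finally have hi: "(\<integral>\<^sup>+x. ennreal ((h x)\<^sup>2) \<partial>LM) < \<infinity>" .
    have lima': "(\<lambda>n. d2 (a (r1 (r2 n))) ha) \<longlonglongrightarrow> 0"
      using LIMSEQ_subseq_LIMSEQ[OF lima r2] by (simp add: o_def)
    have "(\<lambda>n. d2 (f ((r1 \<circ> r2) n)) h) \<longlonglongrightarrow> 0"
    proof (rule tendsto_sandwich[of "\<lambda>_. 0" _ _ "\<lambda>n. 2 * (d2 (a (r1 (r2 n))) ha + d2 (b (r1 (r2 n))) hb)"])
      show "\<forall>\<^sub>F n in sequentially. 0 \<le> d2 (f ((r1 \<circ> r2) n)) h" by simp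
      show "\<forall>\<^sub>F n in sequentially. d2 (f ((r1 \<circ> r2) n)) h \<le> 2 * (d2 (a (r1 (r2 n))) ha + d2 (b (r1 (r2 n))) hb)"
      proof (intro always_eventually allI)
        fix n
        let ?k = "r1 (r2 n)"
        have "d2 (f ?k) h \<le> 2 * d2 (f ?k) (m ?k) + 2 * d2 (m ?k) h"
          by (rule d2_tri[OF fm mm hm])
        also have "d2 (m ?k) h \<le> d2 (a ?k) ha + d2 (b ?k) hb"
          unfolding m_def h_def by (rule d2_max[OF am bm ham hbm])
        finally show "d2 (f ((r1 \<circ> r2) n)) h \<le> 2 * (d2 (a (r1 (r2 n))) ha + d2 (b (r1 (r2 n))) hb)"
          using fm0 by (simp add: mult_left_mono)
      qed
      show "(\<lambda>_. 0) \<longlonglongrightarrow> (0::ennreal)" by simp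
      show "(\<lambda>n. 2 * (d2 (a (r1 (r2 n))) ha + d2 (b (r1 (r2 n))) hb)) \<longlonglongrightarrow> 0"
        using ennreal_tendsto_cmult[OF _ tendsto_add[OF lima' limb], of 2] by simp
    qed
    then show "\<exists>r h. strict_mono r \<and> h \<in> borel_measurable LM \<and>
        (\<integral>\<^sup>+x. ennreal ((h x)\<^sup>2) \<partial>LM) < \<infinity> \<and> (\<lambda>n. d2 (f (r n)) h) \<longlonglongrightarrow> 0"
      using strict_mono_o[OF r1 r2] hm hi by blast
  qed
qed

lemma N_UN:
  fixes X :: "real \<Rightarrow> real^'d \<Rightarrow> real^'d" and A :: "nat \<Rightarrow> (real^'d) set"
  assumes DL: "DL_flow u X" and A: "\<And>i. A i \<in> N_family X"
  shows "(\<Union>i. A i) \<in> N_family X"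
proof -
  define E where "E k = (\<Union>i<k. A i)" for k
  have EN: "E k \<in> N_family X" for k
  proof (induction k)
    case 0
    have "E 0 = {}" by (simp add: E_def)
    then show ?case using N_empty[OF DL] by simp
  next
    case (Suc k)
    have "E (Suc k) = E k \<union> A k" by (simp add: E_def lessThan_Suc Un_commute)
    then show ?case using N_Un[OF DL Suc A[of k]] by simp
  qed
  have Es: "E k \<in> sets LM" for k using N_sets[OF EN] .
  define D where "D = (\<Union>i. A i)"
  have Ds: "D \<in> sets LM" unfolding D_def
  proof (rule sets.countable_UN)
    show "range A \<subseteq> sets LM" using A N_sets by blast
  qed
  have ED: "E k \<subseteq> D" for k unfolding E_def D_def by auto
  define F' where "F' = {g. \<exists>t\<ge>0. transported X D t g \<and> (\<forall>x. g x = 0 \<or> g x = 1)}"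
  define e where "e = (\<lambda>k. emeasure LM (D - E k))"
  have e: "e \<longlonglongrightarrow> 0"
  proof -
    have L: "(\<lambda>k. emeasure LM (D - E k)) \<longlonglongrightarrow> emeasure LM (\<Inter>k. D - E k)"
    proof (rule Lim_emeasure_decseq)
      show "range (\<lambda>k. D - E k) \<subseteq> sets LM" using Ds Es by auto
      show "decseq (\<lambda>k. D - E k)" unfolding decseq_def
      proof (intro allI impI)
        fix m n :: nat assume "m \<le> n"
        then have "E m \<subseteq> E n" unfolding E_def by (intro UN_mono) auto
        then show "D - E n \<subseteq> D - E m" by blast
      qed
      show "emeasure LM (D - E k) \<noteq> \<infinity>" for k
        using finite_measure.emeasure_finite[OF finite_LM] by simp
    qed
    moreover have I: "(\<Inter>k. D - E k) = {}"
    proof -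
      have "x \<notin> (\<Inter>k. D - E k)" for x
      proof
        assume x: "x \<in> (\<Inter>k. D - E k)"
        then have xD: "x \<in> D" by blast
        from xD obtain i where "x \<in> A i" unfolding D_def by blast
        then have "x \<in> E (Suc i)" unfolding E_def by blast
        moreover have "x \<notin> E (Suc i)" using x by blast
        ultimately show False by blast
      qed
      then show ?thesis by blast
    qed
    show ?thesis using L unfolding e_def I emeasure_empty .
  qed
  have pcF': "precompact_L2 F'"
  proof (rule AL[where G = "\<lambda>k. {g. \<exists>t\<ge>0. transported X (E k) t g}" and e = e])
    show "f \<in> borel_measurable LM" if "f \<in> F'" for f
    proof -
      from that obtain t where "transported X D t f" unfolding F'_def by blast
      then show ?thesis by (rule transp_meas)
    qed
    show "f x = 0 \<or> f x = 1" if "f \<in> F'" for f x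
      using that unfolding F'_def by blast
    show "precompact_L2 {g. \<exists>t\<ge>0. transported X (E k) t g}" for k
      by (rule N_pc[OF EN])
    show "g \<in> borel_measurable LM" if "g \<in> {g. \<exists>t\<ge>0. transported X (E k) t g}" for k g
    proof -
      from that obtain t where "transported X (E k) t g" by blast
      then show ?thesis by (rule transp_meas)
    qed
    show "\<exists>g\<in>{g. \<exists>t\<ge>0. transported X (E k) t g}. d2 f g \<le> e k" if "f \<in> F'" for f k
    proof -
      have "\<exists>t. t \<ge> 0 \<and> transported X D t f \<and> (\<forall>x. f x = 0 \<or> f x = 1)"
        using that unfolding F'_def by simp
      then obtain t where t: "t \<ge> 0" and ft: "transported X D t f" by (elim exE conjE)
      from EX[OF DL t Es[of k]] obtain g where gt: "transported X (E k) t g"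
        and "\<forall>x. g x = 0 \<or> g x = 1" by (elim exE conjE)
      have "d2 f g = (\<integral>\<^sup>+x. ennreal ((indicator D x - indicator (E k) x)\<^sup>2) \<partial>LM)"
        by (rule GL[OF DL t ft gt])
      also have "\<dots> = (\<integral>\<^sup>+x. indicator (D - E k) x \<partial>LM)"
      proof (rule nn_integral_cong)
        fix x
        show "ennreal ((indicator D x - indicator (E k) x)\<^sup>2) = indicator (D - E k) x"
          using ED[of k] by (cases "x \<in> D"; cases "x \<in> E k") auto
      qed
      also have "\<dots> = emeasure LM (D - E k)"
        by (rule nn_integral_indicator) (use Ds Es[of k] in auto)
      also have "\<dots> = e k" unfolding e_def by simp
      finally have "d2 f g \<le> e k" by simp
      moreover have "g \<in> {g. \<exists>t\<ge>0. transported X (E k) t g}" using t gt by blast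
      ultimately show ?thesis by blast
    qed
    show "e \<longlonglongrightarrow> 0" by (rule e)
  qed
  have "precompact_L2 {g. \<exists>t\<ge>0. transported X D t g}"
  proof (rule RL[OF pcF'])
    fix f assume "f \<in> {g. \<exists>t\<ge>0. transported X D t g}"
    then obtain t where t: "t \<ge> 0" and ft: "transported X D t f" by blast
    obtain g where gt: "transported X D t g" and g01: "\<forall>x. g x = 0 \<or> g x = 1"
      using EX[OF DL t Ds] by blast
    have "d2 f g = 0" using GL[OF DL t ft gt] by simp
    moreover have "g \<in> F'" unfolding F'_def using t gt g01 by blast
    ultimately show "f \<in> borel_measurable LM \<and> (\<exists>f'\<in>F'. f' \<in> borel_measurable LM \<and> d2 f f' = 0)"
      using transp_meas[OF ft] transp_meas[OF gt] by blast
  qed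
  then show ?thesis unfolding N_family_def D_def[symmetric] using Ds by blast
qed

theorem lemma4p2:
  fixes u X :: "real \<Rightarrow> real^'d \<Rightarrow> real^'d" and p :: real
  assumes "CARD('d) \<ge> 2"
    and "1 < p"
    and "Linf_W1p p u"
    and "div_free u"
    and "DL_flow u X"
  shows "sigma_algebra unit_cube (N_family X)"
  unfolding sigma_algebra_iff2
proof (intro conjI ballI allI impI)
  note DL = \<open>DL_flow u X\<close>
  show "N_family X \<subseteq> Pow unit_cube"
  proof
    fix D assume "D \<in> N_family X"
    then have "D \<in> sets LM" by (rule N_sets)
    then show "D \<in> Pow unit_cube" using sets.sets_into_space by fastforce
  qed
  show "{} \<in> N_family X" by (rule N_empty[OF DL])
  show "unit_cube - s \<in> N_family X" if "s \<in> N_family X" for s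
    by (rule N_compl[OF DL that])
  show "(\<Union>i. A i) \<in> N_family X" if "range A \<subseteq> N_family X" for A :: "nat \<Rightarrow> (real^'d) set"
    using that by (intro N_UN[OF DL]) auto
qed

end
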